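(* If $f\in C^2(\mathbb T,\mathbb R)$ is non-degenerate, then $$\mathcal H^0(\{f=0\})=\frac1\pi\int_0^{2\pi}\frac{f'(x)^2-f(x)f''(x)}{f(x)^2+f'(x)^2}\,dx .$$
   Context: $\mathbb T=\mathbb R/2\pi\mathbb Z$, functions on $\mathbb T$ are identified with $2\pi$-periodic functions on $\mathbb R$, and $\mathcal H^0(\{f=0\})$ is the number of zeros of $f$ in one period $[0,2\pi)$. $f$ is non-degenerate if $\min_x\sqrt{f(x)^2+f'(x)^2}>0$. *)

theory Defs
  imports "HOL-Analysis.Analysis"
begin

end

theory Submission
  imports Defs "HOL-Analysis.Analysis"
begin

lemma zero_sign:
  fixes f f' :: "real \<Rightarrow> real"
  assumes d1: "(f has_real_derivative f' z) (at z)" and "f z = 0" and "f' z \<noteq> 0"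
  shows "eventually (\<lambda>s. f s * f' z * (s - z) > 0) (at z)"
proof -
  have "((\<lambda>s. (f s - f z)/(s - z)) \<longlongrightarrow> f' z) (at z)"
    using d1 by (simp add: has_field_derivative_iff)
  then have "((\<lambda>s. (f s - f z)/(s - z) * f' z) \<longlongrightarrow> f' z * f' z) (at z)"
    by (intro tendsto_intros)
  moreover have "f' z * f' z > 0" using assms(3) by (metis not_real_square_gt_zero)
  ultimately have "eventually (\<lambda>s. (f s - f z)/(s - z) * f' z > 0) (at z)"
    using order_tendstoD(1) by blast
  moreover have "eventually (\<lambda>s. s \<noteq> z) (at z)" by (simp add: eventually_at_filter)
  ultimately show ?thesis
  proof (rule eventually_elim2)
    fix s assume a: "(f s - f z)/(s - z) * f' z > 0" and b: "s \<noteq> z"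
    have "0 < (f s)/(s - z) * f' z" using a assms(2) by simp
    moreover have "(s-z)^2 > 0" using b by simp
    ultimately have "0 < (f s)/(s - z) * f' z * (s-z)^2" by (rule mult_pos_pos)
    also have "\<dots> = f s * f' z * (s - z)" using b by (simp add: power2_eq_square field_simps)
    finally show "f s * f' z * (s - z) > 0" .
  qed
qed

lemma finite_zeros:
  fixes f f' :: "real \<Rightarrow> real"
  assumes d1: "\<And>x. (f has_real_derivative f' x) (at x)"
    and nz: "\<And>x. f x = 0 \<Longrightarrow> f' x \<noteq> 0"
  shows "finite {x \<in> {a..b}. f x = 0}"
proof (rule ccontr)
  assume inf: "infinite {x \<in> {a..b}. f x = 0}"
  obtain x where x: "x \<in> {a..b}" "x islimpt {x \<in> {a..b}. f x = 0}"
    using Heine_Borel_imp_Bolzano_Weierstrass[OF compact_Icc inf, of a b] by blast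
  have cf: "continuous_on UNIV f"
    using d1 by (meson DERIV_isCont continuous_at_imp_continuous_on)
  have "closed {x \<in> {a..b}. f x = 0}"
    using continuous_closed_preimage_constant[OF continuous_on_subset[OF cf] closed_atLeastAtMost]
    by (simp add: Collect_conj_eq Int_commute vimage_def)
  then have fx: "f x = 0" using x closed_limpt by blast
  have "eventually (\<lambda>s. f s * f' x * (s - x) > 0) (at x)"
    using zero_sign[of f f' x, OF d1[of x] fx nz[OF fx]] .
  then obtain d where d: "d > 0" "\<And>s. s \<noteq> x \<Longrightarrow> dist s x < d \<Longrightarrow> f s * f' x * (s - x) > 0"
    unfolding eventually_at by auto
  then obtain s where "s \<in> {x \<in> {a..b}. f x = 0}" "s \<noteq> x" "dist s x < d"
    using x(2) islimpt_approachable by blast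
  with d show False by fastforce
qed

lemma arctan_swap:
  fixes a b :: real
  assumes "a \<noteq> 0" "b \<noteq> 0"
  shows "- arctan (b / a) = arctan (a / b) - sgn (a * b) * pi / 2"
proof -
  have "b / a = 1 / (a / b)" by simp
  then have "arctan (b / a) = sgn (a / b) * pi / 2 - arctan (a / b)"
    using Transcendental.arctan_inverse[of "a / b"] assms by simp
  moreover have "sgn (a / b) = sgn (a * b)" by (simp add: sgn_mult sgn_divide)
  ultimately show ?thesis by simp
qed

lemma sign_help:
  fixes a b c s t :: real
  assumes "a * c * (s - t) > 0" "b * c > 0"
  shows "s < t \<Longrightarrow> a * b < 0" and "t < s \<Longrightarrow> a * b > 0"
  using assms by (auto simp: zero_less_mult_iff mult_less_0_iff)

lemma alg1:
  fixes a b c :: real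
  assumes "a \<noteq> 0"
  shows "0 - inverse (1 + (b / a)\<^sup>2) * ((c * a - b * b) / (a * a)) = (b\<^sup>2 - a * c) / (a\<^sup>2 + b\<^sup>2)"
proof -
  have p: "a\<^sup>2 + b\<^sup>2 > 0" using assms by (simp add: add_pos_nonneg)
  have q: "inverse (1 + (b / a)\<^sup>2) = a\<^sup>2 / (a\<^sup>2 + b\<^sup>2)" using assms p
    by (simp add: field_simps inverse_eq_divide)
  have "a\<^sup>2 / (a\<^sup>2 + b\<^sup>2) * ((c * a - b * b) / (a * a)) = (c * a - b * b) / (a\<^sup>2 + b\<^sup>2)"
    using assms p by (simp add: power2_eq_square)
  then show ?thesis unfolding q by (simp add: power2_eq_square minus_divide_left algebra_simps)
qed
lemma alg2:
  fixes a b c :: real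
  assumes "b \<noteq> 0"
  shows "0 + inverse (1 + (a / b)\<^sup>2) * ((b * b - a * c) / (b * b)) = (b\<^sup>2 - a * c) / (a\<^sup>2 + b\<^sup>2)"
proof -
  have p: "a\<^sup>2 + b\<^sup>2 > 0" using assms by (simp add: add_nonneg_pos)
  have q: "inverse (1 + (a / b)\<^sup>2) = b\<^sup>2 / (a\<^sup>2 + b\<^sup>2)" using assms p
    by (simp add: field_simps inverse_eq_divide)
  have "b\<^sup>2 / (a\<^sup>2 + b\<^sup>2) * ((b * b - a * c) / (b * b)) = (b * b - a * c) / (a\<^sup>2 + b\<^sup>2)"
    using assms p by (simp add: power2_eq_square)
  then show ?thesis unfolding q by (simp add: power2_eq_square)
qed
lemma deriv1:
  fixes f f' f'' :: "real \<Rightarrow> real"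
  assumes "(f has_real_derivative f' t) (at t)" "(f' has_real_derivative f'' t) (at t)" "f t \<noteq> 0"
  shows "((\<lambda>s. C - arctan (f' s / f s)) has_real_derivative
          ((f' t)\<^sup>2 - f t * f'' t) / ((f t)\<^sup>2 + (f' t)\<^sup>2)) (at t)"
proof -
  have "((\<lambda>s. C - arctan (f' s / f s)) has_real_derivative
     0 - inverse (1 + (f' t / f t)\<^sup>2) * ((f'' t * f t - f' t * f' t) / (f t * f t))) (at t)"
    by (intro derivative_intros DERIV_chain2[OF DERIV_arctan] assms)
  moreover have "0 - inverse (1 + (f' t / f t)\<^sup>2) * ((f'' t * f t - f' t * f' t) / (f t * f t))
     = ((f' t)\<^sup>2 - f t * f'' t) / ((f t)\<^sup>2 + (f' t)\<^sup>2)"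
    using assms(3) alg1 by simp
  ultimately show ?thesis by simp
qed

lemma deriv2:
  fixes f f' f'' :: "real \<Rightarrow> real"
  assumes "(f has_real_derivative f' t) (at t)" "(f' has_real_derivative f'' t) (at t)" "f' t \<noteq> 0"
  shows "((\<lambda>s. C + arctan (f s / f' s)) has_real_derivative
          ((f' t)\<^sup>2 - f t * f'' t) / ((f t)\<^sup>2 + (f' t)\<^sup>2)) (at t)"
proof -
  have "((\<lambda>s. C + arctan (f s / f' s)) has_real_derivative
     0 + inverse (1 + (f t / f' t)\<^sup>2) * ((f' t * f' t - f t * f'' t) / (f' t * f' t))) (at t)"
    by (intro derivative_intros DERIV_chain2[OF DERIV_arctan] assms)
  moreover have "0 + inverse (1 + (f t / f' t)\<^sup>2) * ((f' t * f' t - f t * f'' t) / (f' t * f' t))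
     = ((f' t)\<^sup>2 - f t * f'' t) / ((f t)\<^sup>2 + (f' t)\<^sup>2)"
    using assms(3) alg2 by simp
  ultimately show ?thesis by simp
qed


theorem corollary1:
  fixes f f' f'' :: "real \<Rightarrow> real"
  assumes periodic: "\<And>x. f (x + 2 * pi) = f x"
    and d1: "\<And>x. (f has_real_derivative f' x) (at x)"
    and d2: "\<And>x. (f' has_real_derivative f'' x) (at x)"
    and cont2: "continuous_on UNIV f''"
    and nondeg: "(INF x. sqrt ((f x)\<^sup>2 + (f' x)\<^sup>2)) > 0"
  shows "real (card {x \<in> {0..<2 * pi}. f x = 0})
           = (1 / pi) * integral {0..2 * pi}
               (\<lambda>x. ((f' x)\<^sup>2 - f x * f'' x) / ((f x)\<^sup>2 + (f' x)\<^sup>2))"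
proof -
  define g where "g x = ((f' x)\<^sup>2 - f x * f'' x) / ((f x)\<^sup>2 + (f' x)\<^sup>2)" for x
  define N where "N s = card {x. 0 \<le> x \<and> x < s \<and> f x = 0}" for s
  define \<phi> where "\<phi> s = (if f s = 0 then pi / 2 else - arctan (f' s / f s))" for s
  define \<Phi> where "\<Phi> s = pi * real (N s) + \<phi> s" for s
  have nz: "f' x \<noteq> 0" if "f x = 0" for x
  proof
    assume "f' x = 0"
    have "bdd_below (range (\<lambda>x. sqrt ((f x)\<^sup>2 + (f' x)\<^sup>2)))"
      by (rule bdd_belowI[of _ 0]) auto
    then have "(INF x. sqrt ((f x)\<^sup>2 + (f' x)\<^sup>2)) \<le> sqrt ((f x)\<^sup>2 + (f' x)\<^sup>2)"
      by (rule cINF_lower) simp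
    with nondeg that \<open>f' x = 0\<close> show False by simp
  qed
  have fin: "finite {x. 0 \<le> x \<and> x < s \<and> f x = 0}" for s
    by (rule finite_subset[OF _ finite_zeros[OF d1 nz, of 0 s]]) auto
  have cf: "isCont f x" for x using d1 DERIV_isCont by blast
  have cf': "isCont f' x" for x using d2 DERIV_isCont by blast
  have deriv: "(\<Phi> has_real_derivative g t) (at t)" if t0: "0 \<le> t" for t
  proof (cases "f t = 0")
    case False
    have "eventually (\<lambda>s. f s \<noteq> 0) (at t)"
      using cf[of t] False unfolding isCont_def by (rule tendsto_imp_eventually_ne)
    then obtain d where d: "d > 0" "\<And>s. s \<noteq> t \<Longrightarrow> dist s t < d \<Longrightarrow> f s \<noteq> 0"
      unfolding eventually_at by auto
    have d': "f s \<noteq> 0" if "dist s t < d" for s using d False that by (cases "s = t") auto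
    have ev: "eventually (\<lambda>s. \<Phi> s = pi * real (N t) - arctan (f' s / f s)) (nhds t)"
      unfolding eventually_nhds_metric
    proof (intro exI[of _ d] conjI allI impI)
      fix s assume s: "dist s t < d"
      have "{x. 0 \<le> x \<and> x < s \<and> f x = 0} = {x. 0 \<le> x \<and> x < t \<and> f x = 0}"
      proof -
        have "f x \<noteq> 0" if "min s t \<le> x" "x \<le> max s t" for x
          using d'[of x] s that by (auto simp: dist_real_def)
        then show ?thesis by (auto simp: not_less) (smt (verit))+
      qed
      then show "\<Phi> s = pi * real (N t) - arctan (f' s / f s)"
        using d'[OF s] unfolding \<Phi>_def N_def \<phi>_def by simp
    qed (use d in auto)
    show ?thesis
      by (subst DERIV_cong_ev[OF refl ev refl]) (unfold g_def, rule deriv1[of f f' t f'', OF d1[of t] d2[of t] False])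
  next
    case True
    have ft': "f' t \<noteq> 0" using nz True by blast
    have "((\<lambda>s. f' s * f' t) \<longlongrightarrow> f' t * f' t) (at t)"
      using cf'[of t] unfolding isCont_def by (intro tendsto_intros)
    moreover have "f' t * f' t > 0" using ft' by (metis not_real_square_gt_zero)
    ultimately have "eventually (\<lambda>s. f' s * f' t > 0) (at t)"
      using order_tendstoD(1) by blast
    then have "eventually (\<lambda>s. f' s * f' t > 0 \<and> f s * f' t * (s - t) > 0) (at t)"
      using zero_sign[of f f' t, OF d1 True ft'] by eventually_elim auto
    then obtain d where d: "d > 0" "\<And>s. s \<noteq> t \<Longrightarrow> dist s t < d \<Longrightarrow> f' s * f' t > 0 \<and> f s * f' t * (s - t) > 0"
      unfolding eventually_at by auto
    have fnz: "f s \<noteq> 0" if "s \<noteq> t" "dist s t < d" for s using d(2)[OF that] by auto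
    have ev: "eventually (\<lambda>s. \<Phi> s = pi * real (N t) + pi / 2 + arctan (f s / f' s)) (nhds t)"
      unfolding eventually_nhds_metric
    proof (intro exI[of _ d] conjI allI impI)
      fix s assume s: "dist s t < d"
      consider "s = t" | "s < t" | "t < s" by linarith
      then show "\<Phi> s = pi * real (N t) + pi / 2 + arctan (f s / f' s)"
      proof cases
        case 1 then show ?thesis using True unfolding \<Phi>_def \<phi>_def by simp
      next
        case 2
        have "{x. 0 \<le> x \<and> x < s \<and> f x = 0} = {x. 0 \<le> x \<and> x < t \<and> f x = 0}"
        proof -
          have "f x \<noteq> 0" if "s \<le> x" "x < t" for x
            using fnz[of x] s that by (auto simp: dist_real_def)
          then show ?thesis using 2 by (auto simp: not_less) (smt (verit))+
        qed
        then have Ns: "N s = N t" unfolding N_def by simp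
        have fs: "f s \<noteq> 0" using fnz 2 s by auto
        have fs': "f' s \<noteq> 0" using d(2)[of s] 2 s by auto
        have "f s * f' s < 0" using sign_help(1)[of "f s" "f' t" s t "f' s"] d(2)[of s] 2 s by auto
        then have "sgn (f s * f' s) = -1" by simp
        then show ?thesis using arctan_swap[OF fs fs'] fs Ns unfolding \<Phi>_def \<phi>_def by simp
      next
        case 3
        have "{x. 0 \<le> x \<and> x < s \<and> f x = 0} = insert t {x. 0 \<le> x \<and> x < t \<and> f x = 0}"
        proof -
          have "f x \<noteq> 0" if "t < x" "x < s" for x
            using fnz[of x] s that by (auto simp: dist_real_def)
          then show ?thesis using 3 t0 True by (auto simp: not_less) (smt (verit))+
        qed
        then have Ns: "N s = N t + 1" unfolding N_def using fin[of t] by simp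
        have fs: "f s \<noteq> 0" using fnz 3 s by auto
        have fs': "f' s \<noteq> 0" using d(2)[of s] 3 s by auto
        have "f s * f' s > 0" using sign_help(2)[of "f s" "f' t" s t "f' s"] d(2)[of s] 3 s by auto
        then have "sgn (f s * f' s) = 1" by simp
        then show ?thesis using arctan_swap[OF fs fs'] fs Ns unfolding \<Phi>_def \<phi>_def
          by (simp add: algebra_simps)
      qed
    qed (use d in auto)
    show ?thesis
      by (subst DERIV_cong_ev[OF refl ev refl]) (unfold g_def, rule deriv2[of f f' t f'', OF d1[of t] d2[of t] ft'])
  qed
  have "(g has_integral (\<Phi> (2 * pi) - \<Phi> 0)) {0..2 * pi}"
  proof (rule fundamental_theorem_of_calculus)
    fix x assume "x \<in> {0..2 * pi}"
    then have "(\<Phi> has_real_derivative g x) (at x)" using deriv by auto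
    then show "(\<Phi> has_vector_derivative g x) (at x within {0..2 * pi})"
      by (simp add: has_real_derivative_iff_has_vector_derivative has_vector_derivative_at_within)
  qed simp
  then have I: "integral {0..2 * pi} g = \<Phi> (2 * pi) - \<Phi> 0" by (rule integral_unique)
  have per': "f' (x + 2 * pi) = f' x" for x
  proof -
    have "((\<lambda>y. f (y + 2 * pi)) has_real_derivative f' (x + 2 * pi) * 1) (at x)"
      by (rule DERIV_chain2[OF d1]) (auto intro!: derivative_eq_intros)
    then have "(f has_real_derivative f' (x + 2 * pi)) (at x)" using periodic by simp
    then show ?thesis using d1 DERIV_unique by blast
  qed
  have "\<phi> (2 * pi) = \<phi> 0" using periodic[of 0] per'[of 0] unfolding \<phi>_def by simp
  moreover have "N 0 = 0" unfolding N_def by (metis (no_types, lifting) card.empty empty_Collect_eq not_less)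
  moreover have "N (2 * pi) = card {x \<in> {0..<2 * pi}. f x = 0}" unfolding N_def
    by (rule arg_cong[where f = card]) auto
  ultimately have "integral {0..2 * pi} g = pi * card {x \<in> {0..<2 * pi}. f x = 0}"
    unfolding I \<Phi>_def by simp
  then show ?thesis unfolding g_def by simp
qed

end
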